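(* Let $A\in\mathbb{R}^{n\times n}$ be symmetric and let $X_0 = AWA$ for some matrix $W\in\mathbb{R}^{n\times n}$. Define iterates $$X_{k+1} = X_k + AS_k(S_k^\top A^2 S_k)^\dagger S_k^\top (A - A X_k A) S_k (S_k^\top A^2 S_k)^\dagger S_k^\top A,\qquad k\ge0,$$ for arbitrary matrices $S_k\in\mathbb{R}^{n\times\tau}$. Then for each $k\ge0$ there exists a matrix $Q_k$ such that $X_k - A^\dagger = A Q_k A$.
   Context: $A^\dagger$ denotes the Moore–Penrose pseudoinverse of $A$. *)

theory Defs
  imports "HOL-Analysis.Analysis"
begin

definition pinv :: "real^'n^'m \<Rightarrow> real^'m^'n" where
  "pinv A = (THE B. A ** B ** A = A \<and> B ** A ** B = B \<and>
                    transpose (A ** B) = A ** B \<and> transpose (B ** A) = B ** A)"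

end

theory Submission
  imports Defs
begin

lemma matrix_add_rdistrib: "((B + C) ** (A::'a::semiring_1^'n^'m)) = (B ** A) + (C ** A)"
  by (vector matrix_matrix_mult_def sum.distrib[symmetric] field_simps)

lemma matrix_diff_ldistrib: "(A::'a::ring_1^'n^'m) ** (B - C) = (A ** B) - (A ** C)"
  by (vector matrix_matrix_mult_def sum_subtractf[symmetric] field_simps)

lemma matrix_diff_rdistrib: "((B - C) ** (A::'a::ring_1^'n^'m)) = (B ** A) - (C ** A)"
  by (vector matrix_matrix_mult_def sum_subtractf[symmetric] field_simps)

lemma ginv_exists:
  fixes C :: "real^'n^'n"
  shows "\<exists>G. C ** G ** C = C"
proof -
  obtain g where g: "Vector_Spaces.linear (*s) (*s) g"
      "\<forall>v\<in>(*v) C ` UNIV. C *v g v = v"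
    using vec.linear_exists_right_inverse_on[OF matrix_vector_mul_linear_gen vec.subspace_UNIV, of C]
    by blast
  have "C ** matrix g ** C = C"
    unfolding matrix_eq
    using g by (simp add: matrix_vector_mul_assoc[symmetric] matrix_works)
  then show ?thesis by blast
qed

lemma vec_cancel:
  fixes A :: "real^'n^'n"
  assumes sym: "transpose A = A" and h: "A *v (A *v z) = 0"
  shows "A *v z = 0"
proof -
  let ?w = "A *v z"
  have "?w \<bullet> ?w = (z v* A) \<bullet> ?w"
    by (metis sym transpose_matrix_vector)
  also have "\<dots> = z \<bullet> (A *v ?w)" by (rule dot_lmul_matrix)
  also have "\<dots> = 0" using h by simp
  finally show ?thesis by simp
qed

lemma left_cancel:
  fixes A X Y :: "real^'n^'n"
  assumes sym: "transpose A = A" and h: "A ** A ** X = A ** A ** Y"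
  shows "A ** X = A ** Y"
  unfolding matrix_eq
proof
  fix v
  have "A *v (A *v (X *v v)) = A *v (A *v (Y *v v))"
    using h by (metis matrix_vector_mul_assoc)
  then have "A *v (A *v (X *v v - Y *v v)) = 0"
    by (simp add: matrix_vector_mult_diff_distrib)
  then have "A *v (X *v v - Y *v v) = 0" by (rule vec_cancel[OF sym])
  then show "(A ** X) *v v = (A ** Y) *v v"
    by (simp add: matrix_vector_mult_diff_distrib matrix_vector_mul_assoc[symmetric])
qed

lemma right_cancel:
  fixes A X Y :: "real^'n^'n"
  assumes sym: "transpose A = A" and h: "X ** A ** A = Y ** A ** A"
  shows "X ** A = Y ** A"
proof -
  have "transpose (X ** A ** A) = transpose (Y ** A ** A)" using h by simp
  then have "A ** A ** transpose X = A ** A ** transpose Y"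
    by (simp add: matrix_transpose_mul sym matrix_mul_assoc)
  then have "A ** transpose X = A ** transpose Y" by (rule left_cancel[OF sym])
  then have "transpose (A ** transpose X) = transpose (A ** transpose Y)" by simp
  then show ?thesis by (simp add: matrix_transpose_mul sym)
qed

definition penrose :: "real^'n^'m \<Rightarrow> real^'m^'n \<Rightarrow> bool" where
  "penrose A B \<longleftrightarrow> A ** B ** A = A \<and> B ** A ** B = B \<and>
                    transpose (A ** B) = A ** B \<and> transpose (B ** A) = B ** A"

lemma penrose_unique:
  assumes "penrose A B" "penrose A C"
  shows "B = C"
proof -
  from assms have b1: "A ** B ** A = A" and b2: "B ** A ** B = B"
    and b3: "transpose (A ** B) = A ** B" and b4: "transpose (B ** A) = B ** A"
    and c1: "A ** C ** A = A" and c2: "C ** A ** C = C"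
    and c3: "transpose (A ** C) = A ** C" and c4: "transpose (C ** A) = C ** A"
    by (auto simp: penrose_def)
  have "B = B ** (A ** B)" using b2 by (simp add: matrix_mul_assoc)
  also have "\<dots> = B ** transpose (A ** B)" using b3 by simp
  also have "\<dots> = B ** transpose (A ** C ** A ** B)" using c1 by simp
  also have "\<dots> = B ** (transpose (A ** B) ** transpose (A ** C))"
    by (simp add: matrix_transpose_mul matrix_mul_assoc)
  also have "\<dots> = B ** (A ** B) ** (A ** C)" using b3 c3 by (simp add: matrix_mul_assoc)
  also have "\<dots> = B ** A ** C" using b2 by (simp add: matrix_mul_assoc)
  finally have eB: "B = B ** A ** C" .
  have "C = (C ** A) ** C" using c2 by (simp add: matrix_mul_assoc)
  also have "\<dots> = transpose (C ** A) ** C" using c4 by simp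
  also have "\<dots> = transpose (C ** (A ** B ** A)) ** C" using b1 by simp
  also have "\<dots> = transpose ((C ** A) ** (B ** A)) ** C" by (simp add: matrix_mul_assoc)
  also have "\<dots> = (transpose (B ** A) ** transpose (C ** A)) ** C"
    by (simp add: matrix_transpose_mul)
  also have "\<dots> = (B ** A) ** ((C ** A) ** C)" using b4 c4 by (simp add: matrix_mul_assoc)
  also have "\<dots> = B ** A ** C" using c2 by (simp add: matrix_mul_assoc)
  finally show ?thesis using eB by simp
qed

lemma pinv_sym:
  fixes A :: "real^'n^'n"
  assumes sym: "transpose A = A"
  shows "\<exists>G. pinv A = A ** G ** A"
proof -
  obtain G where g: "(A ** A ** A) ** G ** (A ** A ** A) = A ** A ** A"
    using ginv_exists by blast
  have gi1: "A ** G ** (A ** A ** A) = A" if g: "(A ** A ** A) ** G ** (A ** A ** A) = A ** A ** A" for G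
  proof -
    have "A ** A ** (A ** G ** (A ** A ** A)) = A ** A ** A"
      using g by (simp add: matrix_mul_assoc)
    then have "A ** (A ** G ** (A ** A ** A)) = A ** A" by (rule left_cancel[OF sym])
    then have "A ** A ** (G ** (A ** A ** A)) = A ** A ** mat 1"
      by (simp add: matrix_mul_assoc)
    then have "A ** (G ** (A ** A ** A)) = A ** mat 1" by (rule left_cancel[OF sym])
    then show ?thesis by (simp add: matrix_mul_assoc)
  qed
  have gi2: "A ** A ** G ** A ** A = A" if g: "(A ** A ** A) ** G ** (A ** A ** A) = A ** A ** A" for G
  proof -
    have "(A ** A ** G ** A) ** A ** A = mat 1 ** A ** A"
      using gi1[OF g] by (metis matrix_mul_assoc matrix_mul_lid)
    then have "(A ** A ** G ** A) ** A = mat 1 ** A" by (rule right_cancel[OF sym])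
    then show ?thesis by (simp add: matrix_mul_assoc)
  qed
  have gT: "(A ** A ** A) ** transpose G ** (A ** A ** A) = A ** A ** A"
  proof -
    have "transpose ((A ** A ** A) ** G ** (A ** A ** A)) = transpose (A ** A ** A)"
      using g by simp
    then show ?thesis by (simp add: matrix_transpose_mul sym matrix_mul_assoc)
  qed
  define B where "B = A ** G ** A"
  have p1: "A ** B ** A = A" using gi2[OF g] by (simp add: B_def matrix_mul_assoc)
  have p2: "B ** A ** B = B"
  proof -
    have "B ** A ** B = (A ** G ** (A ** A ** A)) ** G ** A"
      by (simp add: B_def matrix_mul_assoc)
    then show ?thesis using gi1[OF g] by (simp add: B_def)
  qed
  have p3: "transpose (A ** B) = A ** B"
  proof -
    define P where "P = A ** B"
    have PA: "P ** A = A" using p1 by (simp add: P_def)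
    have "transpose P = A ** (transpose G ** A ** A)"
      by (simp add: P_def B_def matrix_transpose_mul sym matrix_mul_assoc)
    also have "\<dots> = P ** A ** (transpose G ** A ** A)" using PA by simp
    also have "\<dots> = P ** transpose P"
      by (simp add: P_def B_def matrix_transpose_mul sym matrix_mul_assoc)
    finally have e: "transpose P = P ** transpose P" .
    then have "P = transpose (P ** transpose P)" by (metis transpose_transpose)
    also have "\<dots> = P ** transpose P" by (simp add: matrix_transpose_mul)
    finally show ?thesis using e by (simp add: P_def)
  qed
  have p4: "transpose (B ** A) = B ** A"
  proof -
    define Q where "Q = B ** A"
    have AQ: "A ** Q = A" using p1 by (simp add: Q_def matrix_mul_assoc)
    have "transpose Q = (A ** A ** transpose G) ** A"
      by (simp add: Q_def B_def matrix_transpose_mul sym matrix_mul_assoc)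
    also have "\<dots> = (A ** A ** transpose G) ** (A ** Q)" using AQ by simp
    also have "\<dots> = transpose Q ** Q"
      by (simp add: Q_def B_def matrix_transpose_mul sym matrix_mul_assoc)
    finally have e: "transpose Q = transpose Q ** Q" .
    then have "Q = transpose (transpose Q ** Q)" by (metis transpose_transpose)
    also have "\<dots> = transpose Q ** Q" by (simp add: matrix_transpose_mul)
    finally show ?thesis using e by (simp add: Q_def)
  qed
  have pB: "penrose A B" using p1 p2 p3 p4 by (simp add: penrose_def)
  have "pinv A = B"
    unfolding pinv_def
  proof (rule the_equality)
    show "A ** B ** A = A \<and> B ** A ** B = B \<and> transpose (A ** B) = A ** B \<and> transpose (B ** A) = B ** A"
      using p1 p2 p3 p4 by simp
  next
    fix C assume "A ** C ** A = A \<and> C ** A ** C = C \<and> transpose (A ** C) = A ** C \<and> transpose (C ** A) = C ** A"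
    then have "penrose A C" by (simp add: penrose_def)
    then show "C = B" using penrose_unique[OF pB] by simp
  qed
  then show ?thesis using B_def by blast
qed

theorem lemma4:
  fixes A W :: "real^'n^'n"
    and S :: "nat \<Rightarrow> real^'t^'n"
    and X :: "nat \<Rightarrow> real^'n^'n"
  assumes symA: "transpose A = A"
    and X0: "X 0 = A ** W ** A"
    and Xstep: "\<And>k. X (Suc k) = X k +
        A ** S k ** pinv (transpose (S k) ** (A ** A) ** S k) ** transpose (S k)
          ** (A - A ** X k ** A) ** S k
          ** pinv (transpose (S k) ** (A ** A) ** S k) ** transpose (S k) ** A"
  shows "\<forall>k. \<exists>Q :: real^'n^'n. X k - pinv A = A ** Q ** A"
proof
  fix k
  obtain G where G: "pinv A = A ** G ** A" using pinv_sym[OF symA] by blast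
  show "\<exists>Q :: real^'n^'n. X k - pinv A = A ** Q ** A"
  proof (induction k)
    case 0
    have "X 0 - pinv A = A ** (W - G) ** A"
      by (simp add: X0 G matrix_diff_ldistrib matrix_diff_rdistrib)
    then show ?case by blast
  next
    case (Suc k)
    then obtain Q where Q: "X k - pinv A = A ** Q ** A" by blast
    define M where "M = S k ** pinv (transpose (S k) ** (A ** A) ** S k) ** transpose (S k)
          ** (A - A ** X k ** A) ** S k
          ** pinv (transpose (S k) ** (A ** A) ** S k) ** transpose (S k)"
    have "X (Suc k) - pinv A = (X k - pinv A) + A ** M ** A"
      by (simp add: Xstep M_def matrix_mul_assoc)
    also have "\<dots> = A ** (Q + M) ** A"
      by (simp add: Q matrix_add_ldistrib matrix_add_rdistrib matrix_mul_assoc)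
    finally show ?case by blast
  qed
qed

end
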